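(* There is an absolute constant $C>0$ such that the following holds. Let $n\geq 1$, let $a=(a_1,\dots,a_{2n})\in\mathbb{R}^{2n}$, and let $\sigma$ be a uniformly random permutation in the symmetric group $\Pi_{2n}$ of $\{1,\dots,2n\}$. Define $$f(\sigma)=\left|\sum_{i=1}^{n}a_{\sigma(i)}-\sum_{i=n+1}^{2n}a_{\sigma(i)}\right|.$$ Then for every $p\geq 2$, $$\left(\mathbb{E} f^p\right)^{1/p}\leq \mathbb{E}|f|+C\,p\,\|a\|_2,$$ where $\|a\|_2=\left(\sum_{i=1}^{2n}a_i^2\right)^{1/2}$ and $\mathbb{E}$ denotes expectation with respect to the uniform probability measure on $\Pi_{2n}$.
   Context: Equivalently, $\mathbb{E} f^p=\mathbb{E}\left|\sum_{i=1}^{2n}a_i\varepsilon_i\right|^p$ where $\varepsilon=(\varepsilon_1,\dots,\varepsilon_{2n})$ is uniformly distributed on the set $\{\varepsilon\in\{-1,1\}^{2n}:\sum_{i=1}^{2n}\varepsilon_i=0\}$ (Rademacher signs conditioned to sum to zero). *)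

theory Defs
  imports "HOL-Analysis.Analysis" "HOL-Combinatorics.Permutations"
begin

definition perms2n :: "nat \<Rightarrow> (nat \<Rightarrow> nat) set" where
  "perms2n n = {\<sigma>. \<sigma> permutes {1..2*n}}"

definition fperm :: "nat \<Rightarrow> (nat \<Rightarrow> real) \<Rightarrow> (nat \<Rightarrow> nat) \<Rightarrow> real" where
  "fperm n a \<sigma> = \<bar>(\<Sum>i=1..n. a (\<sigma> i)) - (\<Sum>i=n+1..2*n. a (\<sigma> i))\<bar>"

definition Eperm :: "nat \<Rightarrow> ((nat \<Rightarrow> nat) \<Rightarrow> real) \<Rightarrow> real" where
  "Eperm n g = (\<Sum>\<sigma>\<in>perms2n n. g \<sigma>) / real (card (perms2n n))"

definition norm2 :: "nat \<Rightarrow> (nat \<Rightarrow> real) \<Rightarrow> real" where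
  "norm2 n a = sqrt (\<Sum>i=1..2*n. (a i)^2)"

end

theory Submission
  imports Defs "HOL-Probability.Hoeffding"
begin

lemma cosh_le_exp_sq: "cosh (x::real) \<le> exp (x^2/2)"
proof -
  have main: "cosh y \<le> exp (y^2/2)" if "y \<ge> 0" for y :: real
  proof -
    have h: "-(2*y) * (1/2) + ln (1 + (1/2) * (exp (2*y) - 1)) \<le> (2*y)^2/8"
      using Hoeffdings_lemma_aux[of "2*y" "1/2"] that by simp
    have e: "1 + (1/2) * (exp (2*y) - 1) = exp y * cosh y"
      by (simp add: cosh_def exp_minus field_simps flip: exp_add)
    have cp: "cosh y > 0" by (simp add: cosh_real_pos)
    have "ln (exp y * cosh y) = y + ln (cosh y)"
      using cp by (simp add: ln_mult)
    moreover have "(2*y)^2/8 = y^2/2" by (simp add: power2_eq_square)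
    ultimately have "ln (cosh y) \<le> y^2/2" using h unfolding e by linarith
    thus ?thesis using cp by (metis exp_le_cancel_iff exp_ln)
  qed
  show ?thesis
  proof (cases "x \<ge> 0")
    case True thus ?thesis using main by simp
  next
    case False thus ?thesis using main[of "-x"] by simp
  qed
qed

definition Sg :: "nat \<Rightarrow> (nat \<Rightarrow> real) \<Rightarrow> (nat \<Rightarrow> nat) \<Rightarrow> real" where
  "Sg n a \<sigma> = (\<Sum>i=1..n. a (\<sigma> i)) - (\<Sum>i=n+1..2*n. a (\<sigma> i))"

definition bb :: "nat \<Rightarrow> (nat \<Rightarrow> real) \<Rightarrow> (nat \<Rightarrow> nat) \<Rightarrow> nat \<Rightarrow> real" where
  "bb n a \<sigma> i = a (\<sigma> i) - a (\<sigma> (i+n))"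

lemma Sg_eq: "Sg n a \<sigma> = (\<Sum>i=1..n. bb n a \<sigma> i)"
proof -
  have "(\<Sum>i=n+1..2*n. a (\<sigma> i)) = (\<Sum>i=1+n..n+n. a (\<sigma> i))" by (simp add: mult_2 add.commute)
  also have "\<dots> = (\<Sum>i=1..n. a (\<sigma> (i+n)))" by (rule sum.shift_bounds_cl_nat_ivl)
  finally show ?thesis unfolding Sg_def bb_def by (simp add: sum_subtractf)
qed

lemma pair_swap:
  fixes G :: "(nat \<Rightarrow> nat) \<Rightarrow> real"
  assumes j: "j \<in> {1..n}"
    and G: "\<And>\<sigma>. \<sigma> \<in> perms2n n \<Longrightarrow> G (\<sigma> \<circ> Transposition.transpose j (j+n)) = G \<sigma>"
  shows "(\<Sum>\<sigma>\<in>perms2n n. exp (l * bb n a \<sigma> j) * G \<sigma>)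
       = (\<Sum>\<sigma>\<in>perms2n n. cosh (l * bb n a \<sigma> j) * G \<sigma>)"
proof -
  define t where "t = Transposition.transpose j (j+n)"
  have tp: "t permutes {1..2*n}" unfolding t_def using j by (intro permutes_swap_id) auto
  have tt: "\<sigma> \<circ> t \<circ> t = \<sigma>" for \<sigma> :: "nat \<Rightarrow> nat"
    unfolding t_def by (auto simp: fun_eq_iff Transposition.transpose_def)
  have inP: "\<sigma> \<circ> t \<in> perms2n n" if "\<sigma> \<in> perms2n n" for \<sigma>
    using that tp permutes_compose unfolding perms2n_def by blast
  have bt: "bb n a (\<sigma> \<circ> t) j = - bb n a \<sigma> j" for \<sigma>
    unfolding bb_def t_def by auto
  define F where "F = (\<lambda>\<sigma>. exp (l * bb n a \<sigma> j) * G \<sigma>)"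
  have "(\<Sum>\<sigma>\<in>perms2n n. F \<sigma>) = (\<Sum>\<sigma>\<in>perms2n n. F (\<sigma> \<circ> t))"
    by (rule sum.reindex_bij_witness[where i="\<lambda>\<sigma>. \<sigma> \<circ> t" and j="\<lambda>\<sigma>. \<sigma> \<circ> t"])
       (auto simp: tt inP)
  also have "\<dots> = (\<Sum>\<sigma>\<in>perms2n n. exp (- (l * bb n a \<sigma> j)) * G \<sigma>)"
    unfolding F_def by (intro sum.cong refl) (simp add: bt G[unfolded t_def[symmetric]])
  finally have eq: "(\<Sum>\<sigma>\<in>perms2n n. F \<sigma>) = (\<Sum>\<sigma>\<in>perms2n n. exp (- (l * bb n a \<sigma> j)) * G \<sigma>)" .
  have "(\<Sum>\<sigma>\<in>perms2n n. cosh (l * bb n a \<sigma> j) * G \<sigma>)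
     = ((\<Sum>\<sigma>\<in>perms2n n. F \<sigma>) + (\<Sum>\<sigma>\<in>perms2n n. exp (- (l * bb n a \<sigma> j)) * G \<sigma>)) / 2"
    unfolding F_def cosh_field_def by (simp add: sum_divide_distrib[symmetric] sum.distrib[symmetric] algebra_simps)
  with eq show ?thesis unfolding F_def by simp
qed

lemma bb_swap_other:
  assumes "i \<in> {1..n}" "j \<in> {1..n}" "i \<noteq> j"
  shows "bb n a (\<sigma> \<circ> Transposition.transpose j (j+n)) i = bb n a \<sigma> i"
  using assms unfolding bb_def by (auto simp: Transposition.transpose_def)

lemma decouple:
  assumes "J \<subseteq> {1..n}"
  shows "(\<Sum>\<sigma>\<in>perms2n n. exp (l * (\<Sum>i=1..n. bb n a \<sigma> i)))
       = (\<Sum>\<sigma>\<in>perms2n n. exp (l * (\<Sum>i\<in>{1..n}-J. bb n a \<sigma> i)) * (\<Prod>i\<in>J. cosh (l * bb n a \<sigma> i)))"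
proof -
  have fin: "finite J" using assms finite_subset by blast
  from fin assms show ?thesis
  proof (induction J rule: finite_subset_induct')
    case empty thus ?case by simp
  next
    case (insert j J)
    define G where "G = (\<lambda>\<sigma>. exp (l * (\<Sum>i\<in>{1..n}-insert j J. bb n a \<sigma> i)) * (\<Prod>i\<in>J. cosh (l * bb n a \<sigma> i)))"
    have split: "{1..n} - J = insert j ({1..n} - insert j J)" using insert by auto
    have "(\<Sum>\<sigma>\<in>perms2n n. exp (l * (\<Sum>i\<in>{1..n}-J. bb n a \<sigma> i)) * (\<Prod>i\<in>J. cosh (l * bb n a \<sigma> i)))
        = (\<Sum>\<sigma>\<in>perms2n n. exp (l * bb n a \<sigma> j) * G \<sigma>)"
      unfolding G_def split by (intro sum.cong refl) (simp add: distrib_left exp_add)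
    also have "\<dots> = (\<Sum>\<sigma>\<in>perms2n n. cosh (l * bb n a \<sigma> j) * G \<sigma>)"
    proof (rule pair_swap)
      show "j \<in> {1..n}" using insert by auto
      fix \<sigma>
      have "(\<Sum>i\<in>{1..n}-insert j J. bb n a (\<sigma> \<circ> Transposition.transpose j (j+n)) i) = (\<Sum>i\<in>{1..n}-insert j J. bb n a \<sigma> i)"
        using insert by (intro sum.cong refl bb_swap_other) auto
      moreover have "(\<Prod>i\<in>J. cosh (l * bb n a (\<sigma> \<circ> Transposition.transpose j (j+n)) i)) = (\<Prod>i\<in>J. cosh (l * bb n a \<sigma> i))"
        using insert by (intro prod.cong refl arg_cong[where f=cosh] arg_cong[where f="\<lambda>x. l*x"] bb_swap_other) auto
      ultimately show "G (\<sigma> \<circ> Transposition.transpose j (j+n)) = G \<sigma>" unfolding G_def by simp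
    qed
    also have "\<dots> = (\<Sum>\<sigma>\<in>perms2n n. exp (l * (\<Sum>i\<in>{1..n}-insert j J. bb n a \<sigma> i)) * (\<Prod>i\<in>insert j J. cosh (l * bb n a \<sigma> i)))"
      unfolding G_def using insert by (intro sum.cong refl) simp
    finally show ?case using insert by simp
  qed
qed

lemma sq_perm: "\<sigma> \<in> perms2n n \<Longrightarrow> (\<Sum>i=1..2*n. (a (\<sigma> i))^2) = (\<Sum>i=1..2*n. (a i)^2)"
  unfolding perms2n_def
  using sum.reindex[of \<sigma> "{1..2*n}" "\<lambda>i. (a i)^2"] permutes_inj_on[of \<sigma> "{1..2*n}"] permutes_image[of \<sigma> "{1..2*n}"]
  by (simp add: comp_def)

lemma key:
  "(\<Sum>\<sigma>\<in>perms2n n. exp (l * Sg n a \<sigma>)) \<le> real (card (perms2n n)) * exp (l^2 * (norm2 n a)^2)"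
proof -
  have N2: "(norm2 n a)^2 = (\<Sum>i=1..2*n. (a i)^2)"
    unfolding norm2_def by (simp add: sum_nonneg)
  have "(\<Sum>\<sigma>\<in>perms2n n. exp (l * Sg n a \<sigma>))
      = (\<Sum>\<sigma>\<in>perms2n n. (\<Prod>i\<in>{1..n}. cosh (l * bb n a \<sigma> i)))"
    unfolding Sg_eq using decouple[of "{1..n}" n l a] by simp
  also have "\<dots> \<le> (\<Sum>\<sigma>\<in>perms2n n. exp (l^2 * (norm2 n a)^2))"
  proof (rule sum_mono)
    fix \<sigma> assume s: "\<sigma> \<in> perms2n n"
    have "(\<Prod>i\<in>{1..n}. cosh (l * bb n a \<sigma> i)) \<le> (\<Prod>i\<in>{1..n}. exp ((l * bb n a \<sigma> i)^2/2))"
      by (intro prod_mono conjI cosh_le_exp_sq) (simp add: cosh_real_nonneg)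
    also have "\<dots> = exp (\<Sum>i\<in>{1..n}. (l * bb n a \<sigma> i)^2/2)"
      by (simp add: exp_sum)
    also have "\<dots> \<le> exp (l^2 * (norm2 n a)^2)"
    proof -
      have "(\<Sum>i\<in>{1..n}. (l * bb n a \<sigma> i)^2/2) \<le> (\<Sum>i\<in>{1..n}. l^2 * ((a (\<sigma> i))^2 + (a (\<sigma> (i+n)))^2))"
      proof (rule sum_mono)
        fix i
        have "(a (\<sigma> i) - a (\<sigma> (i+n)))^2 \<le> 2 * ((a (\<sigma> i))^2 + (a (\<sigma> (i+n)))^2)"
        proof -
          have "0 \<le> (a (\<sigma> i) + a (\<sigma> (i+n)))^2" by simp
          thus ?thesis unfolding power2_diff power2_sum by (smt (verit))
        qed
        hence "l^2 * (a (\<sigma> i) - a (\<sigma> (i+n)))^2 \<le> l^2 * (2 * ((a (\<sigma> i))^2 + (a (\<sigma> (i+n)))^2))"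
          by (intro mult_left_mono) auto
        thus "(l * bb n a \<sigma> i)^2/2 \<le> l^2 * ((a (\<sigma> i))^2 + (a (\<sigma> (i+n)))^2)"
        proof -
          have "(l * bb n a \<sigma> i)^2/2 = l^2 * (a (\<sigma> i) - a (\<sigma> (i+n)))^2 / 2"
            unfolding bb_def by (simp add: power_mult_distrib)
          moreover have "l^2 * (2 * ((a (\<sigma> i))^2 + (a (\<sigma> (i+n)))^2)) = 2 * (l^2 * ((a (\<sigma> i))^2 + (a (\<sigma> (i+n)))^2))"
            by simp
          ultimately show ?thesis using \<open>l^2 * (a (\<sigma> i) - a (\<sigma> (i+n)))^2 \<le> _\<close> by linarith
        qed
      qed
      also have "\<dots> = l^2 * ((\<Sum>i=1..n. (a (\<sigma> i))^2) + (\<Sum>i=1..n. (a (\<sigma> (i+n)))^2))"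
        by (simp add: sum.distrib sum_distrib_left[symmetric] distrib_left[symmetric])
      also have "(\<Sum>i=1..n. (a (\<sigma> (i+n)))^2) = (\<Sum>i=1+n..n+n. (a (\<sigma> i))^2)"
        by (rule sum.shift_bounds_cl_nat_ivl[symmetric])
      also have "(\<Sum>i=1..n. (a (\<sigma> i))^2) + (\<Sum>i=1+n..n+n. (a (\<sigma> i))^2) = (\<Sum>i=1..n+n. (a (\<sigma> i))^2)"
        using sum.ub_add_nat[of 1 n "\<lambda>i. (a (\<sigma> i))^2" n] by (simp add: add.commute)
      also have "\<dots> = (norm2 n a)^2" using sq_perm[OF s, of a] N2 by (simp add: mult_2)
      finally show ?thesis by simp
    qed
    finally show "(\<Prod>i\<in>{1..n}. cosh (l * bb n a \<sigma> i)) \<le> exp (l^2 * (norm2 n a)^2)" .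
  qed
  also have "\<dots> = real (card (perms2n n)) * exp (l^2 * (norm2 n a)^2)" by simp
  finally show ?thesis .
qed

lemma pw:
  fixes s N p :: real
  assumes N: "N > 0" and p: "p > 0"
  shows "\<bar>s\<bar> powr p \<le> (N * p / exp 1) powr p * (exp (s/N) + exp (-s/N))"
proof (cases "s = 0")
  case True thus ?thesis by simp
next
  case False
  define y where "y = \<bar>s\<bar> / N"
  have y: "y > 0" using False N unfolding y_def by simp
  have "ln (y/p) \<le> y/p - 1" using y p by (intro ln_le_minus_one) simp
  hence "p * ln (y/p) \<le> p * (y/p - 1)" using p by (intro mult_left_mono) auto
  hence "p * ln y \<le> p * ln (p / exp 1) + y" using y p by (simp add: ln_div algebra_simps)
  hence "exp (p * ln y) \<le> exp (p * ln (p / exp 1) + y)" by simp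
  hence yp: "y powr p \<le> (p / exp 1) powr p * exp y"
    using y p by (simp add: powr_def exp_add)
  have ey: "exp y \<le> exp (s/N) + exp (-s/N)"
    unfolding y_def by (cases "s \<ge> 0") (auto simp: add_increasing add_increasing2)
  have "\<bar>s\<bar> powr p = N powr p * y powr p"
    unfolding y_def using N by (simp add: powr_mult[symmetric])
  also have "\<dots> \<le> N powr p * ((p / exp 1) powr p * (exp (s/N) + exp (-s/N)))"
    using yp ey by (intro mult_left_mono order.trans[OF yp] ) auto
  also have "\<dots> = (N * p / exp 1) powr p * (exp (s/N) + exp (-s/N))"
    using N p by (simp add: powr_mult[symmetric] mult.assoc)
  finally show ?thesis .
qed

theorem theorem1p1:
  shows "\<exists>C>0. \<forall>n::nat. \<forall>a::nat \<Rightarrow> real. \<forall>p::real.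
           n \<ge> 1 \<longrightarrow> p \<ge> 2 \<longrightarrow>
           (Eperm n (\<lambda>\<sigma>. fperm n a \<sigma> powr p)) powr (1/p)
             \<le> Eperm n (\<lambda>\<sigma>. \<bar>fperm n a \<sigma>\<bar>) + C * p * norm2 n a"
proof (intro exI[of _ 2] conjI allI impI)
  fix n :: nat and a :: "nat \<Rightarrow> real" and p :: real
  assume n: "n \<ge> 1" and p: "p \<ge> 2"
  define P where "P = perms2n n"
  define N where "N = norm2 n a"
  have finP: "finite P" unfolding P_def perms2n_def by (rule finite_permutations) simp
  have cP: "card P > 0" using finP unfolding P_def perms2n_def
    by (metis (mono_tags) card_gt_0_iff empty_iff mem_Collect_eq permutes_id)
  have f: "fperm n a \<sigma> = \<bar>Sg n a \<sigma>\<bar>" for \<sigma> unfolding fperm_def Sg_def ..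
  have E1: "Eperm n (\<lambda>\<sigma>. \<bar>fperm n a \<sigma>\<bar>) \<ge> 0"
    unfolding Eperm_def by (intro divide_nonneg_nonneg sum_nonneg) auto
  have N0: "N \<ge> 0" unfolding N_def norm2_def by (simp add: sum_nonneg)
  show "(Eperm n (\<lambda>\<sigma>. fperm n a \<sigma> powr p)) powr (1/p)
             \<le> Eperm n (\<lambda>\<sigma>. \<bar>fperm n a \<sigma>\<bar>) + 2 * p * N"
  proof (cases "N = 0")
    case True
    have "(\<Sum>i=1..2*n. (a i)^2) = 0" using True unfolding N_def norm2_def
      by (simp add: sum_nonneg)
    hence a0: "\<forall>i\<in>{1..2*n}. (a i)^2 = 0" by (subst (asm) sum_nonneg_eq_0_iff) auto
    have "Sg n a \<sigma> = 0" if "\<sigma> \<in> P" for \<sigma>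
    proof -
      have "\<sigma> i \<in> {1..2*n}" if "i \<in> {1..2*n}" for i
        using \<open>\<sigma> \<in> P\<close> that unfolding P_def perms2n_def by (metis mem_Collect_eq permutes_in_image)
      hence "a (\<sigma> i) = 0" if "i \<in> {1..2*n}" for i using a0 that by auto
      thus ?thesis unfolding Sg_def by (simp add: sum.neutral)
    qed
    hence "Eperm n (\<lambda>\<sigma>. fperm n a \<sigma> powr p) = 0"
      unfolding Eperm_def f P_def[symmetric] by simp
    thus ?thesis using E1 p N0 by simp
  next
    case False
    hence Np: "N > 0" using N0 by simp
    define K where "K = (N * p / exp 1) powr p"
    have "(\<Sum>\<sigma>\<in>P. fperm n a \<sigma> powr p) \<le> (\<Sum>\<sigma>\<in>P. K * (exp ((1/N) * Sg n a \<sigma>) + exp ((-1/N) * Sg n a \<sigma>)))"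
      unfolding f K_def using pw[OF Np, of p] p by (intro sum_mono) auto
    also have "\<dots> = K * ((\<Sum>\<sigma>\<in>P. exp ((1/N) * Sg n a \<sigma>)) + (\<Sum>\<sigma>\<in>P. exp ((-1/N) * Sg n a \<sigma>)))"
      by (simp add: sum_distrib_left sum.distrib distrib_left)
    also have "\<dots> \<le> K * (real (card P) * exp 1 + real (card P) * exp 1)"
    proof -
      have "(1/N)^2 * N^2 = 1" "(-1/N)^2 * N^2 = 1" using Np by (simp_all add: field_simps)
      thus ?thesis using key[where l="1/N" and n=n and a=a] key[where l="-1/N" and n=n and a=a] unfolding K_def P_def N_def
        by (intro mult_left_mono add_mono) auto
    qed
    finally have "(\<Sum>\<sigma>\<in>P. fperm n a \<sigma> powr p) / card P \<le> K * (2 * exp 1)"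
      using cP by (simp add: divide_simps algebra_simps)
    hence Eb: "Eperm n (\<lambda>\<sigma>. fperm n a \<sigma> powr p) \<le> K * (2 * exp 1)"
      unfolding Eperm_def P_def .
    have "(Eperm n (\<lambda>\<sigma>. fperm n a \<sigma> powr p)) powr (1/p) \<le> (K * (2 * exp 1)) powr (1/p)"
      using Eb p unfolding Eperm_def by (intro powr_mono2 divide_nonneg_nonneg sum_nonneg) auto
    also have "\<dots> = K powr (1/p) * (2 * exp 1) powr (1/p)"
      unfolding K_def by (simp add: powr_mult)
    also have "K powr (1/p) = N * p / exp 1"
      unfolding K_def using Np p by (simp add: powr_powr)
    also have "(2 * exp 1) powr (1/p) \<le> (2 * exp 1) powr 1"
      using p exp_ge_add_one_self[of "1::real"] by (intro powr_mono) auto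
    also have "(2 * exp (1::real)) powr 1 = 2 * exp 1" by simp
    finally have "(Eperm n (\<lambda>\<sigma>. fperm n a \<sigma> powr p)) powr (1/p) \<le> 2 * p * N"
      using Np p by (simp add: field_simps)
    thus ?thesis using E1 by linarith
  qed
qed simp

end
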